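(* For $K\ge N$, there is a symmetric matrix $H_K\in\mathbb{R}^{((K+2)n+m)\times((K+2)n+m)}$, not depending on $x_k$, $u_k$ or the reference values, such that $${}^{K}Q_0=\tfrac12\,\begin{bmatrix}x_k^\top & u_k^\top & r_k^\top & \cdots & r_{k+N}^\top & 0^\top\end{bmatrix} H_K \begin{bmatrix}x_k^\top & u_k^\top & r_k^\top & \cdots & r_{k+N}^\top & 0^\top\end{bmatrix}^\top ,$$ where the trailing zero vector has dimension $(K-N)n$. Partitioning $H_K$ into blocks $h_{ab}$ according to the components $a,b\in\{x,u,r_0,r_1,\dots,r_K\}$ (of sizes $n,m,n,\dots,n$), the blocks have the following zero pattern: $h_{u r_0}=h_{r_0u}^\top=0$; $h_{r_0 r_j}=0$ for all $j\ge1$; $h_{r_1 r_j}=0$ for all $j\neq1$; and $h_{r_i r_0}=h_{r_i r_1}=0$ for all $i\ge2$. All other blocks ($h_{xx},h_{xu},h_{xr_j},h_{uu},h_{ur_j}$ for $j\ge1$, $h_{r_0r_0}$, $h_{r_1r_1}$, and $h_{r_ir_j}$ for $i,j\ge2$, together with their transposes) may be nonzero.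
   Context: Consider the discrete-time linear system $x_{i+1}=Ax_i+Bu_i$ with $x_i\in\mathbb{R}^n$, $u_i\in\mathbb{R}^m$, $A\in\mathbb{R}^{n\times n}$, $B\in\mathbb{R}^{n\times m}$, $(A,B)$ controllable. Fix a time step $k$ and $N\in\mathbb{N}$; references $r_i\in\mathbb{R}^n$ are given for $i=k,\dots,k+N$ and $r_i=0$ for $i>k+N$. The one-step cost is $c_i=\tfrac12\big((x_i-r_i)^\top Q(x_i-r_i)+u_i^\top Ru_i\big)$ with $Q=Q^\top\succeq0$, $R=R^\top\succ0$, and $\gamma\in[0,1)$. For an optimization horizon $K$, the reference-dependent Q-function is defined by backward recursion: ${}^{K}Q_K=c(x_{k+K},u_{k+K},r_{k+K})$ and, for $0\le\kappa<K$, ${}^{K}Q_\kappa=c_{k+\kappa}+\gamma\,{}^{K}Q_{\kappa+1}|_{u_{k+\kappa+1}=u^*_{k+\kappa+1}}$, where $x_{k+\kappa+1}=Ax_{k+\kappa}+Bu_{k+\kappa}$ and $u^*_{k+\kappa+1}$ minimizes ${}^{K}Q_{\kappa+1}$ over $u_{k+\kappa+1}$. Thus ${}^{K}Q_0$ is a function of $x_k,u_k,r_k,\dots,r_{k+K}$. *)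

theory Defs
  imports "HOL-Analysis.Analysis"
begin

text \<open>Controllability of the pair (A,B): the columns of the Kalman controllability
  matrix [B, AB, ..., A^(n-1) B] span R^n (i.e. it has full rank n).\<close>
definition controllable :: "real^'n^'n \<Rightarrow> real^'m^'n \<Rightarrow> bool" where
  "controllable A B \<longleftrightarrow>
     span (\<Union>i<CARD('n). range (\<lambda>v. (((*v) A) ^^ i) (B *v v))) = UNIV"

definition psd :: "real^'n^'n \<Rightarrow> bool" where
  "psd M \<longleftrightarrow> transpose M = M \<and> (\<forall>v. 0 \<le> v \<bullet> (M *v v))"

definition pd :: "real^'n^'n \<Rightarrow> bool" where
  "pd M \<longleftrightarrow> transpose M = M \<and> (\<forall>v. v \<noteq> 0 \<longrightarrow> 0 < v \<bullet> (M *v v))"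

text \<open>One-step cost c(x,u,r).\<close>
definition cost :: "real^'n^'n \<Rightarrow> real^'m^'m \<Rightarrow> real^'n \<Rightarrow> real^'m \<Rightarrow> real^'n \<Rightarrow> real" where
  "cost Q R x u r = (1/2) * ((x - r) \<bullet> (Q *v (x - r)) + u \<bullet> (R *v u))"

text \<open>Qrec A B Q R \<gamma> d \<kappa> x u r is the Q-function (K)Q(kappa) with d = K - kappa remaining
  steps; x = x(k+kappa), u = u(k+kappa), and r j stands for r(k+j) (time shifted by k).\<close>
fun Qrec :: "real^'n^'n \<Rightarrow> real^'m^'n \<Rightarrow> real^'n^'n \<Rightarrow> real^'m^'m \<Rightarrow> real
              \<Rightarrow> nat \<Rightarrow> nat \<Rightarrow> real^'n \<Rightarrow> real^'m \<Rightarrow> (nat \<Rightarrow> real^'n) \<Rightarrow> real" where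
  "Qrec A B Q R \<gamma> 0 \<kappa> x u r = cost Q R x u (r \<kappa>)"
| "Qrec A B Q R \<gamma> (Suc d) \<kappa> x u r =
     (let x' = A *v x + B *v u;
          ustar = (SOME v. \<forall>w. Qrec A B Q R \<gamma> d (Suc \<kappa>) x' v r \<le> Qrec A B Q R \<gamma> d (Suc \<kappa>) x' w r)
      in cost Q R x u (r \<kappa>) + \<gamma> * Qrec A B Q R \<gamma> d (Suc \<kappa>) x' ustar r)"

text \<open>(K)Q(0) as a function of x_k, u_k and the references.\<close>
definition Q0 :: "real^'n^'n \<Rightarrow> real^'m^'n \<Rightarrow> real^'n^'n \<Rightarrow> real^'m^'m \<Rightarrow> real
              \<Rightarrow> nat \<Rightarrow> real^'n \<Rightarrow> real^'m \<Rightarrow> (nat \<Rightarrow> real^'n) \<Rightarrow> real" where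
  "Q0 A B Q R \<gamma> K x u r = Qrec A B Q R \<gamma> K 0 x u r"

text \<open>Block indices of the stacked vector [x; u; r_0; ...; r_K] of dimension (K+2)n+m:
  Bx i is entry i of the x-block, Bu j of the u-block, Br l i entry i of the r_l block.\<close>
datatype ('n, 'm) blk = Bx 'n | Bu 'm | Br nat 'n

definition blkset :: "nat \<Rightarrow> ('n, 'm) blk set" where
  "blkset K = range Bx \<union> range Bu \<union> {Br l i | l i. l \<le> K}"

fun stack :: "real^'n \<Rightarrow> real^'m \<Rightarrow> (nat \<Rightarrow> real^'n) \<Rightarrow> ('n, 'm) blk \<Rightarrow> real" where
  "stack x u r (Bx i) = x $ i"
| "stack x u r (Bu j) = u $ j"
| "stack x u r (Br l i) = r l $ i"

text \<open>z^T H z for a matrix H indexed by blkset K.\<close>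
definition qform :: "nat \<Rightarrow> (('n::finite, 'm::finite) blk \<Rightarrow> ('n, 'm) blk \<Rightarrow> real) \<Rightarrow> (('n, 'm) blk \<Rightarrow> real) \<Rightarrow> real" where
  "qform K H z = (\<Sum>a\<in>blkset K. \<Sum>b\<in>blkset K. z a * H a b * z b)"

end

theory Submission imports Defs "HOL-Library.Function_Algebras" begin

instantiation "fun" :: (type, real_vector) real_vector
begin
definition scaleR_fun :: "real \<Rightarrow> ('a \<Rightarrow> 'b) \<Rightarrow> 'a \<Rightarrow> 'b" where
  "scaleR_fun c f = (\<lambda>x. c *\<^sub>R f x)"
instance by standard (auto simp: scaleR_fun_def fun_eq_iff algebra_simps)
end

lemma scaleR_fun_apply [simp]: "(c *\<^sub>R f) x = c *\<^sub>R f x"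
  by (simp add: scaleR_fun_def)

lemma sum_fun_apply: "(sum f S :: 'a \<Rightarrow> 'b::real_vector) x = sum (\<lambda>a. f a x) S"
  by (induct S rule: infinite_finite_induct) auto

definition quad :: "('a::real_vector \<Rightarrow> real) \<Rightarrow> bool" where
  "quad f \<longleftrightarrow> (\<exists>b. bilinear b \<and> (\<forall>v. f v = b v v))"

lemma quad_sym:
  assumes "quad f"
  shows "\<exists>b. bilinear b \<and> (\<forall>v w. b v w = b w v) \<and> (\<forall>v. f v = b v v)"
proof -
  obtain b where b: "bilinear b" "\<And>v. f v = b v v" using assms quad_def by blast
  let ?c = "\<lambda>v w. (b v w + b w v) / 2"
  have "bilinear ?c"
    using b(1) unfolding bilinear_def linear_iff
    by (auto simp: add_divide_distrib algebra_simps)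
  moreover have "\<forall>v w. ?c v w = ?c w v" by auto
  moreover have "\<forall>v. f v = ?c v v" using b by auto
  ultimately show ?thesis by blast
qed

lemma quad_compose:
  assumes "quad g" "linear L"
  shows "quad (\<lambda>v. g (L v))"
proof -
  obtain b where b: "bilinear b" "\<And>v. g v = b v v" using assms quad_def by blast
  have "bilinear (\<lambda>v w. b (L v) (L w))"
    using b(1) assms(2) unfolding bilinear_def linear_iff by auto
  then show ?thesis unfolding quad_def using b by blast
qed

lemma quad_add:
  assumes "quad f" "quad g"
  shows "quad (\<lambda>v. f v + g v)"
proof -
  obtain b where b: "bilinear b" "\<And>v. f v = b v v" using assms quad_def by blast
  obtain c where c: "bilinear c" "\<And>v. g v = c v v" using assms quad_def by blast
  have "bilinear (\<lambda>v w. b v w + c v w)"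
    using b(1) c(1) unfolding bilinear_def linear_iff by (auto simp: algebra_simps)
  then show ?thesis unfolding quad_def using b c by (intro exI[of _ "\<lambda>v w. b v w + c v w"]) auto
qed

lemma quad_scale:
  assumes "quad f"
  shows "quad (\<lambda>v. a * f v)"
proof -
  obtain b where b: "bilinear b" "\<And>v. f v = b v v" using assms quad_def by blast
  have "bilinear (\<lambda>v w. a * b v w)"
    using b(1) unfolding bilinear_def linear_iff by (auto simp: algebra_simps)
  then show ?thesis unfolding quad_def using b by (intro exI[of _ "\<lambda>v w. a * b v w"]) auto
qed

lemma quad_inner:
  fixes M :: "real^'n^'n"
  shows "quad (\<lambda>x. x \<bullet> (M *v x))"
proof -
  have "bilinear (\<lambda>v w::real^'n. v \<bullet> (M *v w))"
    unfolding bilinear_def linear_iff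
    by (auto simp: inner_add_left inner_add_right matrix_vector_right_distrib
        matrix_vector_mult_scaleR)
  then show ?thesis unfolding quad_def by blast
qed

lemma quad_inner_comp:
  fixes M :: "real^'n^'n"
  assumes "linear L"
  shows "quad (\<lambda>z. L z \<bullet> (M *v L z))"
  using quad_compose[OF quad_inner assms] .

lemma bil_rsum: "bilinear b \<Longrightarrow> b x (sum g S) = sum (\<lambda>i. b x (g i)) S"
  by (induct S rule: infinite_finite_induct) (auto simp: bilinear_radd bilinear_rzero)

lemma vec_expand: "(\<Sum>j\<in>UNIV. (h$j) *\<^sub>R axis j (1::real)) = (h :: real^'m)"
  by (simp add: vec_eq_iff sum_component axis_def if_distrib cong: if_cong)

lemma quad_min:
  fixes f :: "'v::real_vector \<Rightarrow> real^'m \<Rightarrow> real"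
  assumes q: "quad (\<lambda>z. f (fst z) (snd z))" and pdu: "\<forall>u. u \<noteq> 0 \<longrightarrow> 0 < f 0 u"
  shows "\<exists>L. linear L \<and> (\<forall>p u. u \<noteq> L p \<longrightarrow> f p (L p) < f p u)"
proof -
  obtain b where bil: "bilinear b" and sym: "\<And>v w. b v w = b w v"
    and fb: "\<And>z. f (fst z) (snd z) = b z z"
    using quad_sym[OF q] by blast
  have fb': "f p u = b (p,u) (p,u)" for p u using fb[of "(p,u)"] by simp
  define e :: "'m \<Rightarrow> real^'m" where "e j = axis j 1" for j
  define \<Phi> where "\<Phi> u = (\<chi> j. b (0::'v, u) (0, e j))" for u
  define c where "c p = (\<chi> j. b (p, 0::real^'m) (0, e j))" for p
  have lin\<Phi>: "linear \<Phi>"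
  proof (rule linearI)
    fix u v show "\<Phi> (u + v) = \<Phi> u + \<Phi> v"
      using bilinear_ladd[OF bil, of "(0,u)" "(0,v)"] by (simp add: \<Phi>_def vec_eq_iff)
  next
    fix a u show "\<Phi> (a *\<^sub>R u) = a *\<^sub>R \<Phi> u"
      using bilinear_lmul[OF bil, of a "(0,u)"] by (simp add: \<Phi>_def vec_eq_iff)
  qed
  have linc: "linear c"
  proof (rule linearI)
    fix u v show "c (u + v) = c u + c v"
      using bilinear_ladd[OF bil, of "(u,0)" "(v,0)"] by (simp add: c_def vec_eq_iff)
  next
    fix a u show "c (a *\<^sub>R u) = a *\<^sub>R c u"
      using bilinear_lmul[OF bil, of a "(u,0)"] by (simp add: c_def vec_eq_iff)
  qed
  have expand: "b z (0, h) = (\<Sum>j\<in>UNIV. h$j * b z (0, e j))" for z h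
  proof -
    have "(0::'v, h) = (\<Sum>j\<in>UNIV. h$j *\<^sub>R (0::'v, e j))"
      using vec_expand[of h] by (simp add: prod_eq_iff fst_sum snd_sum e_def)
    then have "b z (0, h) = b z (\<Sum>j\<in>UNIV. h$j *\<^sub>R (0::'v, e j))" by simp
    also have "\<dots> = (\<Sum>j\<in>UNIV. h$j * b z (0, e j))"
      by (subst bil_rsum[OF bil], rule sum.cong[OF refl], rule trans[OF bilinear_rmul[OF bil]], simp)
    finally show ?thesis .
  qed
  have inj\<Phi>: "inj \<Phi>"
  proof (rule injI)
    fix u v assume "\<Phi> u = \<Phi> v"
    then have "\<Phi> (u - v) = 0" using linear_diff[OF lin\<Phi>] by simp
    then have "b (0, u - v) (0, u - v) = 0"
      using expand[of "(0, u - v)" "u - v"] by (simp add: \<Phi>_def vec_eq_iff)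
    then have "f 0 (u - v) = 0" using fb' by simp
    then show "u = v" using pdu[rule_format, of "u - v"] by (cases "u - v = 0") auto
  qed
  obtain g where ling: "linear g" and gi: "\<And>y. \<Phi> (g y) = y"
    using linear_injective_isomorphism[OF lin\<Phi> inj\<Phi>] by metis
  define L where "L p = g (- c p)" for p
  have linL: "linear L" unfolding L_def
    using linear_compose[OF linear_compose[OF linc linear_uminus] ling] by (simp add: o_def)
  have orth: "b (p, L p) (0, h) = 0" for p h
  proof -
    have "b (p, L p) (0, e j) = 0" for j
    proof -
      have "b (p, L p) (0, e j) = b (p, 0) (0, e j) + b (0, L p) (0, e j)"
        using bilinear_ladd[OF bil, of "(p,0)" "(0, L p)"] by simp
      also have "\<dots> = c p $ j + \<Phi> (L p) $ j" by (simp add: c_def \<Phi>_def)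
      also have "\<dots> = 0" by (simp add: L_def gi)
      finally show ?thesis .
    qed
    then show ?thesis using expand[of "(p, L p)" h] by simp
  qed
  have "f p (L p) < f p u" if "u \<noteq> L p" for p u
  proof -
    define h where "h = u - L p"
    have h0: "h \<noteq> 0" using that h_def by simp
    have "(p, u) = (p, L p) + (0, h)" by (simp add: h_def)
    then have "f p u = b ((p, L p) + (0, h)) ((p, L p) + (0, h))" using fb' by metis
    also have "\<dots> = b (p, L p) (p, L p) + b (p, L p) (0, h) + b (0, h) (p, L p) + b (0, h) (0, h)"
      by (simp only: bilinear_ladd[OF bil] bilinear_radd[OF bil] add.assoc)
    also have "\<dots> = f p (L p) + f 0 h" using orth[of p h] sym[of "(0,h)" "(p, L p)"] fb' by simp
    finally show ?thesis using pdu h0 by simp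
  qed
  then show ?thesis using linL by blast
qed

lemma argmin_gen:
  fixes f :: "'v::real_vector \<Rightarrow> real^'m \<Rightarrow> real"
  assumes q: "quad (\<lambda>z. f (fst z) (snd z))" and pdu: "\<forall>u. u \<noteq> 0 \<longrightarrow> 0 < f 0 u"
  shows "\<exists>L. linear L \<and> (\<forall>p. (SOME v. \<forall>w. f p v \<le> f p w) = L p) \<and> quad (\<lambda>p. f p (L p))"
proof -
  obtain L where linL: "linear L" and mn: "\<And>p u. u \<noteq> L p \<Longrightarrow> f p (L p) < f p u"
    using quad_min[OF q pdu] by blast
  have "(SOME v. \<forall>w. f p v \<le> f p w) = L p" for p
  proof (rule some_equality)
    show "\<forall>w. f p (L p) \<le> f p w" using mn by (metis order.strict_implies_order order_refl)
  next
    fix v assume "\<forall>w. f p v \<le> f p w"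
    then show "v = L p" using mn[of v p] by (metis not_less)
  qed
  moreover have linP: "linear (\<lambda>p. (p, L p))"
    using linL by (auto simp: linear_iff)
  have "quad (\<lambda>p. f p (L p))" using quad_compose[OF q linP] by simp
  ultimately show ?thesis using linL by blast
qed

lemma cost_nonneg:
  assumes "psd Q" "pd R"
  shows "0 \<le> cost Q R x u r"
proof -
  have "0 \<le> (x - r) \<bullet> (Q *v (x - r))" using assms(1) psd_def by blast
  moreover have "0 \<le> u \<bullet> (R *v u)" using assms(2) unfolding pd_def
    by (cases "u = 0") (auto intro: less_imp_le)
  ultimately show ?thesis by (simp add: cost_def)
qed

lemma Qrec_nonneg:
  assumes "psd Q" "pd R" "0 \<le> \<gamma>"
  shows "0 \<le> Qrec A B Q R \<gamma> d \<kappa> x u r"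
  using assms
  by (induct d arbitrary: \<kappa> x u) (auto simp: Let_def cost_nonneg intro!: add_nonneg_nonneg mult_nonneg_nonneg)

lemma Qrec_quad:
  fixes A :: "real^'n::finite^'n" and B :: "real^'m::finite^'n"
  assumes "psd Q" "pd R" "0 \<le> \<gamma>"
  shows "quad (\<lambda>z::((real^'n) \<times> (nat \<Rightarrow> real^'n)) \<times> (real^'m).
            Qrec A B Q R \<gamma> d \<kappa> (fst (fst z)) (snd z) (snd (fst z)))
       \<and> (\<forall>u. u \<noteq> 0 \<longrightarrow> 0 < Qrec A B Q R \<gamma> d \<kappa> 0 u 0)"
proof (induct d arbitrary: \<kappa>)
  have lin1: "linear (\<lambda>z::((real^'n) \<times> (nat \<Rightarrow> real^'n)) \<times> (real^'m). fst (fst z) - snd (fst z) \<kappa>')" for \<kappa>'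
    by (auto simp: linear_iff algebra_simps)
  have lin2: "linear (\<lambda>z::((real^'n) \<times> (nat \<Rightarrow> real^'n)) \<times> (real^'m). snd z)"
    by (auto simp: linear_iff)
  have cq: "quad (\<lambda>z::((real^'n) \<times> (nat \<Rightarrow> real^'n)) \<times> (real^'m).
           cost Q R (fst (fst z)) (snd z) (snd (fst z) \<kappa>'))" for \<kappa>'
    unfolding cost_def
    by (intro quad_scale quad_add quad_inner_comp lin1 lin2)
  have cpd: "0 < cost Q R 0 u 0" if "u \<noteq> 0" for u :: "real^'m"
    using assms(2) that unfolding pd_def cost_def by simp
  {
    case 0
    show ?case using cq cpd by simp
  next
    case (Suc d)
    define f where "f p u = Qrec A B Q R \<gamma> d (Suc \<kappa>) (fst p) u (snd p)"
      for p :: "(real^'n) \<times> (nat \<Rightarrow> real^'n)" and u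
    have "quad (\<lambda>z. f (fst z) (snd z))" "\<forall>u. u \<noteq> 0 \<longrightarrow> 0 < f 0 u"
      using Suc[of "Suc \<kappa>"] by (simp_all add: f_def zero_fun_def)
    then obtain L where linL: "linear L" and sm: "\<And>p. (SOME v. \<forall>w. f p v \<le> f p w) = L p"
      and qL: "quad (\<lambda>p. f p (L p))"
      using argmin_gen by blast
    have eq: "Qrec A B Q R \<gamma> (Suc d) \<kappa> y u r =
        cost Q R y u (r \<kappa>) + \<gamma> * f (A *v y + B *v u, r) (L (A *v y + B *v u, r))" for y u r
      using sm[of "(A *v y + B *v u, r)"] by (simp add: f_def Let_def)
    have linT: "linear (\<lambda>z::((real^'n) \<times> (nat \<Rightarrow> real^'n)) \<times> (real^'m).
          (A *v fst (fst z) + B *v snd z, snd (fst z)))"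
      by (auto simp: linear_iff algebra_simps matrix_vector_right_distrib matrix_vector_mult_scaleR)
    have "quad (\<lambda>z::((real^'n) \<times> (nat \<Rightarrow> real^'n)) \<times> (real^'m).
           Qrec A B Q R \<gamma> (Suc d) \<kappa> (fst (fst z)) (snd z) (snd (fst z)))"
      unfolding eq by (intro quad_add cq quad_scale quad_compose[OF qL linT, simplified])
    moreover have "0 < Qrec A B Q R \<gamma> (Suc d) \<kappa> 0 u 0" if "u \<noteq> 0" for u
    proof -
      have "0 \<le> \<gamma> * f (A *v 0 + B *v u, 0) (L (A *v 0 + B *v u, 0))"
        using Qrec_nonneg[OF assms] assms(3) by (simp add: f_def)
      then show ?thesis using eq[of 0 u 0] cpd[OF that] by simp
    qed
    ultimately show ?case by blast
  }
qed

lemma Qrec_dep: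
  "(\<forall>j\<ge>\<kappa>. r j = r' j) \<Longrightarrow> Qrec A B Q R \<gamma> d \<kappa> y v r = Qrec A B Q R \<gamma> d \<kappa> y v r'"
proof (induct d arbitrary: \<kappa> y v)
  case 0 then show ?case by simp
next
  case (Suc d)
  have h: "\<forall>j\<ge>Suc \<kappa>. r j = r' j" using Suc.prems by auto
  have e: "(\<lambda>w. Qrec A B Q R \<gamma> d (Suc \<kappa>) x' w r) = (\<lambda>w. Qrec A B Q R \<gamma> d (Suc \<kappa>) x' w r')" for x'
    using Suc.hyps[OF h] by auto
  have "r \<kappa> = r' \<kappa>" using Suc.prems by auto
  then show ?case using e by (simp add: Let_def) metis
qed

definition cq :: "real^'n^'n \<Rightarrow> real^'n \<Rightarrow> real^'n \<Rightarrow> real" where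
  "cq Q y \<rho> = (1/2) * ((y - \<rho>) \<bullet> (Q *v (y - \<rho>)))"

lemma Qrec_shift:
  assumes "\<forall>j>\<kappa>. r j = r' j"
  shows "Qrec A B Q R \<gamma> d \<kappa> y v r - cq Q y (r \<kappa>) = Qrec A B Q R \<gamma> d \<kappa> y v r' - cq Q y (r' \<kappa>)"
proof (cases d)
  case 0 then show ?thesis by (simp add: cost_def cq_def algebra_simps)
next
  case (Suc d')
  have h: "\<forall>j\<ge>Suc \<kappa>. r j = r' j" using assms by auto
  have e: "(\<lambda>w. Qrec A B Q R \<gamma> d' (Suc \<kappa>) x' w r) = (\<lambda>w. Qrec A B Q R \<gamma> d' (Suc \<kappa>) x' w r')" for x'
    by (intro ext Qrec_dep[OF h])
  show ?thesis using Suc e by (simp add: Let_def cost_def cq_def algebra_simps) metis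
qed

lemma Qrec_some_shift:
  assumes "\<forall>j>\<kappa>. r j = r' j"
  shows "(SOME v. \<forall>w. Qrec A B Q R \<gamma> d \<kappa> y v r \<le> Qrec A B Q R \<gamma> d \<kappa> y w r)
       = (SOME v. \<forall>w. Qrec A B Q R \<gamma> d \<kappa> y v r' \<le> Qrec A B Q R \<gamma> d \<kappa> y w r')"
proof -
  have "Qrec A B Q R \<gamma> d \<kappa> y v r = Qrec A B Q R \<gamma> d \<kappa> y v r' + (cq Q y (r \<kappa>) - cq Q y (r' \<kappa>))" for v
    using Qrec_shift[OF assms, where A=A and B=B and Q=Q and R=R and \<gamma>=\<gamma> and d=d and y=y and v=v] by simp
  then show ?thesis by simp
qed

fun ee :: "('n, 'm) blk \<Rightarrow> (real^'n) \<times> (real^'m) \<times> (nat \<Rightarrow> real^'n)" where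
  "ee (Bx i) = (axis i 1, 0, 0)"
| "ee (Bu j) = (0, axis j 1, 0)"
| "ee (Br l i) = (0, 0, \<lambda>k. if k = l then axis i 1 else 0)"

lemma blkset_split:
  "blkset K = range Bx \<union> range Bu \<union> (\<lambda>(l,i). Br l i) ` ({..K} \<times> UNIV)"
  unfolding blkset_def by auto

lemma blk_expand:
  fixes x :: "real^'n::finite" and u :: "real^'m::finite"
  assumes "\<forall>j>K. r j = 0"
  shows "(x, u, r) = (\<Sum>a\<in>blkset K. stack x u r a *\<^sub>R ee a)"
proof -
  let ?g = "\<lambda>a. stack x u r a *\<^sub>R ee a"
  have fin1: "finite (range Bx \<union> range (Bu :: 'm \<Rightarrow> ('n,'m) blk))" by simp
  have fin2: "finite ((\<lambda>(l,i). Br l i) ` ({..K} \<times> UNIV) :: ('n,'m) blk set)" by simp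
  have "(\<Sum>a\<in>blkset K. ?g a) = (\<Sum>a\<in>range Bx. ?g a) + (\<Sum>a\<in>range Bu. ?g a)
        + (\<Sum>a\<in>(\<lambda>(l,i). Br l i) ` ({..K} \<times> UNIV). ?g a)"
  proof -
    have "(\<Sum>a\<in>range Bx \<union> range Bu. ?g a) = (\<Sum>a\<in>range Bx. ?g a) + (\<Sum>a\<in>range Bu. ?g a)"
      by (rule sum.union_disjoint) auto
    moreover have "(\<Sum>a\<in>(range Bx \<union> range Bu) \<union> (\<lambda>(l,i). Br l i) ` ({..K} \<times> UNIV). ?g a)
       = (\<Sum>a\<in>range Bx \<union> range Bu. ?g a) + (\<Sum>a\<in>(\<lambda>(l,i). Br l i) ` ({..K} \<times> UNIV). ?g a)"
      by (rule sum.union_disjoint[OF fin1 fin2]) auto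
    ultimately show ?thesis by (simp add: blkset_split)
  qed
  also have "(\<Sum>a\<in>range Bx. ?g a) = (\<Sum>i\<in>UNIV. ?g (Bx i))"
    by (subst sum.reindex) (auto simp: inj_def)
  also have "\<dots> = (x, 0, 0)"
    using vec_expand[of x] by (simp add: prod_eq_iff fst_sum snd_sum)
  also have "(\<Sum>a\<in>range Bu. ?g a) = (\<Sum>j\<in>UNIV. ?g (Bu j))"
    by (subst sum.reindex) (auto simp: inj_def)
  also have "\<dots> = (0, u, 0)"
    using vec_expand[of u] by (simp add: prod_eq_iff fst_sum snd_sum)
  also have "(\<Sum>a\<in>(\<lambda>(l,i). Br l i) ` ({..K} \<times> UNIV). ?g a) = (\<Sum>(l,i)\<in>{..K} \<times> UNIV. ?g (Br l i))"
    by (subst sum.reindex) (auto simp: inj_on_def case_prod_beta)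
  also have "\<dots> = (0, 0, r)"
  proof -
    have "(\<Sum>(l,i)\<in>{..K} \<times> UNIV. r l $ i *\<^sub>R (if k = l then axis i 1 else 0)) = r k" for k
    proof -
      have "(\<Sum>(l,i)\<in>{..K} \<times> UNIV. r l $ i *\<^sub>R (if k = l then axis i 1 else 0))
          = (\<Sum>l\<in>{..K}. \<Sum>i\<in>UNIV. r l $ i *\<^sub>R (if k = l then axis i 1 else 0))"
        by (simp add: sum.cartesian_product)
      also have "\<dots> = (\<Sum>l\<in>{..K}. if k = l then r k else 0)"
        by (rule sum.cong[OF refl]) (simp add: vec_expand)
      also have "\<dots> = r k" using assms by (auto simp: not_le)
      finally show ?thesis .
    qed
    then show ?thesis
      by (simp add: prod_eq_iff fst_sum snd_sum fun_eq_iff sum_fun_apply case_prod_beta)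
  qed
  finally show ?thesis by (simp add: fun_eq_iff times_fun_def)
qed

definition pol :: "('a::real_vector \<Rightarrow> real) \<Rightarrow> 'a \<Rightarrow> 'a \<Rightarrow> real" where
  "pol f v w = f (v + w) - f v - f w"

lemma pol_inv_r: "(\<forall>z. f (z + w) = f z) \<Longrightarrow> f 0 = 0 \<Longrightarrow> pol f v w = 0"
proof -
  assume h: "\<forall>z. f (z + w) = f z" and f0: "f 0 = 0"
  have "f (v + w) = f v" using h by blast
  moreover have "f w = 0" using h[rule_format, of 0] f0 by simp
  ultimately show ?thesis by (simp add: pol_def)
qed

lemma pol_inv_l: "(\<forall>z. f (z + v) = f z) \<Longrightarrow> f 0 = 0 \<Longrightarrow> pol f v w = 0"
proof -
  assume h: "\<forall>z. f (z + v) = f z" and f0: "f 0 = 0"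
  have "f (v + w) = f w" using h[rule_format, of w] by (simp add: add.commute)
  moreover have "f v = 0" using h[rule_format, of 0] f0 by simp
  ultimately show ?thesis by (simp add: pol_def)
qed

lemma pol_sum4: "pol (\<lambda>z. f1 z + f2 z + f3 z + f4 z) v w = pol f1 v w + pol f2 v w + pol f3 v w + pol f4 v w"
  unfolding pol_def by simp

theorem theorem1:
  fixes A :: "real^'n::finite^'n" and B :: "real^'m::finite^'n"
    and Q :: "real^'n^'n" and R :: "real^'m^'m" and \<gamma> :: real and N K :: nat
  assumes "controllable A B"
    and "psd Q" and "pd R"
    and "0 \<le> \<gamma>" and "\<gamma> < 1"
    and "N \<le> K"
  shows "\<exists>H :: ('n, 'm) blk \<Rightarrow> ('n, 'm) blk \<Rightarrow> real.
     (\<forall>a\<in>blkset K. \<forall>b\<in>blkset K. H a b = H b a)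
   \<and> (\<forall>j i. H (Bu j) (Br 0 i) = 0 \<and> H (Br 0 i) (Bu j) = 0)
   \<and> (\<forall>l i i'. 1 \<le> l \<and> l \<le> K \<longrightarrow> H (Br 0 i) (Br l i') = 0)
   \<and> (\<forall>l i i'. 1 \<le> K \<and> l \<le> K \<and> l \<noteq> 1 \<longrightarrow> H (Br 1 i) (Br l i') = 0)
   \<and> (\<forall>l i i'. 2 \<le> l \<and> l \<le> K \<longrightarrow> H (Br l i) (Br 0 i') = 0 \<and> H (Br l i) (Br 1 i') = 0)
   \<and> (\<forall>(x :: real^'n) (u :: real^'m) (r :: nat \<Rightarrow> real^'n).
        (\<forall>j>N. r j = 0) \<longrightarrow>
        Q0 A B Q R \<gamma> K x u r = (1/2) * qform K H (stack x u r))"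
proof -
  note Qa = assms(2,3,4)
  define F where "F w = Q0 A B Q R \<gamma> K (fst w) (fst (snd w)) (snd (snd w))"
    for w :: "(real^'n) \<times> (real^'m) \<times> (nat \<Rightarrow> real^'n)"
  have lin: "linear (\<lambda>w::(real^'n) \<times> (real^'m) \<times> (nat \<Rightarrow> real^'n). ((fst w, snd (snd w)), fst (snd w)))"
    by (auto simp: linear_iff)
  have qF: "quad F"
    using quad_compose[OF Qrec_quad[where A=A and B=B and d=K and \<kappa>=0, OF Qa, THEN conjunct1] lin]
    by (simp add: F_def[abs_def] Q0_def)
  obtain b where bil: "bilinear b" and sym: "\<And>v w. b v w = b w v" and fb: "\<And>v. F v = b v v"
    using quad_sym[OF qF] by blast
  define H where "H a c = pol F (ee a) (ee c)" for a c :: "('n,'m) blk"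
  have H2: "H a c = 2 * b (ee a) (ee c)" for a c
    unfolding H_def pol_def fb
    by (simp add: bilinear_ladd[OF bil] bilinear_radd[OF bil] sym[of "ee c" "ee a"])
  have Hsym: "H a c = H c a" for a c by (simp add: H_def pol_def add.commute)
  have F0: "F 0 = 0" using fb bilinear_lzero[OF bil] by simp
  define P1 where "P1 w = cq Q (fst w) (snd (snd w) 0)"
    for w :: "(real^'n) \<times> (real^'m) \<times> (nat \<Rightarrow> real^'n)"
  define P2 where "P2 w = (1/2) * (fst (snd w) \<bullet> (R *v fst (snd w)))"
    for w :: "(real^'n) \<times> (real^'m) \<times> (nat \<Rightarrow> real^'n)"
  define P3 where "P3 w = (if K = 0 then 0 else \<gamma> * cq Q (A *v fst w + B *v fst (snd w)) (snd (snd w) 1))"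
    for w :: "(real^'n) \<times> (real^'m) \<times> (nat \<Rightarrow> real^'n)"
  define P4 where "P4 w = F w - P1 w - P2 w - P3 w"
    for w :: "(real^'n) \<times> (real^'m) \<times> (nat \<Rightarrow> real^'n)"
  have Fsplit: "F = (\<lambda>w. P1 w + P2 w + P3 w + P4 w)" by (simp add: P4_def fun_eq_iff)
  have polH: "H a c = pol P1 (ee a) (ee c) + pol P2 (ee a) (ee c) + pol P3 (ee a) (ee c) + pol P4 (ee a) (ee c)" for a c
    unfolding H_def by (subst Fsplit) (rule pol_sum4)
  have P10: "P1 0 = 0" by (simp add: P1_def cq_def)
  have P20: "P2 0 = 0" by (simp add: P2_def)
  have P30: "P3 0 = 0" by (simp add: P3_def cq_def)
  have P40: "P4 0 = 0" by (simp add: P4_def F0 P10 P20 P30)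
  have I1u: "\<forall>z. P1 (z + ee (Bu j)) = P1 z" for j by (simp add: P1_def)
  have I1r: "\<forall>z. P1 (z + ee (Br l i)) = P1 z" if "l \<noteq> 0" for l i using that by (simp add: P1_def)
  have I2r: "\<forall>z. P2 (z + ee (Br l i)) = P2 z" for l i by (simp add: P2_def)
  have I3r: "\<forall>z. P3 (z + ee (Br l i)) = P3 z" if "l \<noteq> 1" for l i using that by (simp add: P3_def)
  have I4r: "\<forall>z. P4 (z + ee (Br l i)) = P4 z" if "l \<le> 1" for l i
  proof (cases K)
    case 0
    have "P4 z = 0" for z by (simp add: P4_def F_def Q0_def P1_def P2_def P3_def 0 cost_def cq_def) (simp add: field_simps)
    then show ?thesis by simp
  next
    case (Suc K')
    define G where "G y r = Qrec A B Q R \<gamma> K' 1 y (SOME v. \<forall>w. Qrec A B Q R \<gamma> K' 1 y v r \<le> Qrec A B Q R \<gamma> K' 1 y w r) r - cq Q y (r 1)" for y r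
    have P4G: "P4 z = \<gamma> * G (A *v fst z + B *v fst (snd z)) (snd (snd z))" for z
      by (simp add: P4_def F_def Q0_def P1_def P2_def P3_def Suc cost_def cq_def G_def Let_def algebra_simps)
    have GG: "G y r = G y r'" if "\<forall>j>1. r j = r' j" for y r r'
    proof -
      have "(SOME v. \<forall>w. Qrec A B Q R \<gamma> K' 1 y v r \<le> Qrec A B Q R \<gamma> K' 1 y w r)
          = (SOME v. \<forall>w. Qrec A B Q R \<gamma> K' 1 y v r' \<le> Qrec A B Q R \<gamma> K' 1 y w r')"
        by (rule Qrec_some_shift[OF that])
      then show ?thesis unfolding G_def using Qrec_shift[OF that] by simp
    qed
    show ?thesis
    proof
      fix z :: "(real^'n) \<times> (real^'m) \<times> (nat \<Rightarrow> real^'n)"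
      have "\<forall>j>1. snd (snd (z + ee (Br l i))) j = snd (snd z) j" using that by simp
      then show "P4 (z + ee (Br l i)) = P4 z" unfolding P4G using GG by simp
    qed
  qed
  have C1: "H (Bu j) (Br 0 i) = 0" for j i
    unfolding polH
    using pol_inv_l[OF I1u P10] pol_inv_r[OF I2r P20] pol_inv_r[OF I3r P30] pol_inv_r[OF I4r P40] by simp
  have C2: "H (Br 0 i) (Br l i') = 0" if "1 \<le> l" for l i i'
    unfolding polH using that
    using pol_inv_r[OF I1r P10] pol_inv_l[OF I2r P20] pol_inv_l[OF I3r P30] pol_inv_l[OF I4r P40] by simp
  have C3: "H (Br 1 i) (Br l i') = 0" if "l \<noteq> 1" for l i i'
    unfolding polH using that
    using pol_inv_l[OF I1r P10] pol_inv_l[OF I2r P20] pol_inv_r[OF I3r P30] pol_inv_l[OF I4r P40] by simp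
  have C4: "H (Br l i) (Br l' i') = 0" if "2 \<le> l" "l' \<le> 1" for l l' i i'
    unfolding polH using that
    using pol_inv_l[OF I1r P10] pol_inv_l[OF I2r P20] pol_inv_l[OF I3r P30] pol_inv_r[OF I4r P40] by simp
  have MAIN: "Q0 A B Q R \<gamma> K x u r = (1/2) * qform K H (stack x u r)"
    if "\<forall>j>N. r j = 0" for x u r
  proof -
    let ?s = "stack x u r" and ?S = "blkset K :: ('n,'m) blk set"
    have rK: "\<forall>j>K. r j = 0" using that assms(6) by auto
    have "Q0 A B Q R \<gamma> K x u r = F (x, u, r)" by (simp add: F_def)
    also have "\<dots> = b (\<Sum>a\<in>?S. ?s a *\<^sub>R ee a) (\<Sum>a\<in>?S. ?s a *\<^sub>R ee a)"
      by (subst blk_expand[OF rK, of x u], rule fb)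
    also have "\<dots> = (\<Sum>(a,c)\<in>?S \<times> ?S. b (?s a *\<^sub>R ee a) (?s c *\<^sub>R ee c))"
      by (rule bilinear_sum[OF bil])
    also have "\<dots> = (\<Sum>(a,c)\<in>?S \<times> ?S. (1/2) * (?s a * H a c * ?s c))"
      by (rule sum.cong[OF refl]) (auto simp: bilinear_lmul[OF bil] bilinear_rmul[OF bil] H2)
    also have "\<dots> = (1/2) * qform K H ?s"
      by (simp only: qform_def sum_distrib_left sum.cartesian_product) (rule sum.cong, auto)
    finally show ?thesis .
  qed
  show ?thesis
    apply (rule exI[of _ H])
    apply (intro conjI)
    subgoal using Hsym by blast
    subgoal apply (intro allI conjI) apply (rule C1) apply (subst Hsym) apply (rule C1) done
    subgoal using C2 by simp
    subgoal using C3 by simp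
    subgoal using C4 by simp
    subgoal using MAIN by blast
    done
qed

end
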